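(* Let $V$ be a simple Yetter-Drinfeld module over $H=B(n,w,\gamma)$ with $\dim_\Bbbk V=p+1$ for some $p\ge0$. For any standard element $v\in V$, the set $\{v,y\cdot v,\dots,y^p\cdot v\}$ is a basis of $V$.
   Context: $\Bbbk$ is an algebraically closed field of characteristic $0$; $n,w$ positive integers, $\gamma$ a primitive $n$-th root of unity. $H=B(n,w,\gamma)$ is the Hopf algebra generated by $x^{\pm1},g,y$ with relations $xx^{-1}=x^{-1}x=1$, $xg=gx$, $xy=yx$, $yg=\gamma gy$, $y^n=1-x^w=1-g^n$, with $\Delta(x)=x\otimes x$, $\Delta(g)=g\otimes g$, $\Delta(y)=y\otimes g+1\otimes y$, $\varepsilon(x)=\varepsilon(g)=1$, $\varepsilon(y)=0$, $S(x)=x^{-1}$, $S(g)=g^{-1}$, $S(y)=-yg^{-1}$; $G(H)=\{g^jx^k\}$. A (left-left) Yetter-Drinfeld module is a left $H$-module, left $H$-comodule $(V,\cdot,\delta)$ with $\delta(h\cdot v)=h_{(1)}v_{(-1)}S(h_{(3)})\otimes h_{(2)}\cdot v_{(0)}$; simple means no nonzero proper Yetter-Drinfeld submodules. A nonzero $v\in V$ is a standard element of type $(\alpha,\beta,h)$ if $h\in G(H)$, $\alpha,\beta\in\Bbbk^*$, $x\cdot v=\alpha v$, $g\cdot v=\beta v$, $\delta(v)=h\otimes v$. *)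

theory Defs
  imports Main "HOL-Computational_Algebra.Polynomial"
begin

text \<open>The Hopf algebra H = B(n,w,gamma) is represented by its PBW basis
  g^j x^k y^i (0 <= i < n, 0 <= j < n, k in Z); the index (i,j,k) stands for g^j x^k y^i.
  Elements of H are finitely supported coefficient functions on such indices,
  H (x) H and H (x) H (x) H are coefficient functions on pairs / triples of indices,
  and H (x) V is represented by V-valued coefficient functions on indices.\<close>

type_synonym idx = "nat \<times> nat \<times> int"

definition Bidx :: "nat \<Rightarrow> idx set" where
  "Bidx n = {(i, j, k). i < n \<and> j < n}"

definition supp :: "('a \<Rightarrow> 'b::zero) \<Rightarrow> 'a set" where
  "supp f = {c. f c \<noteq> 0}"

definition ind :: "'a \<Rightarrow> 'a \<Rightarrow> 'k::field" where
  "ind b = (\<lambda>c. if c = b then 1 else 0)"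

text \<open>mono n w j k i = the element g^j x^k y^i, written in the basis (for j, i < 2n),
  using g^n = x^w and y^n = 1 - x^w.\<close>
definition mono :: "nat \<Rightarrow> nat \<Rightarrow> nat \<Rightarrow> int \<Rightarrow> nat \<Rightarrow> idx \<Rightarrow> 'k::field" where
  "mono n w j k i =
     (let j' = (if j < n then j else j - n);
          k' = (if j < n then k else k + int w)
      in if i < n then ind (i, j', k')
         else (\<lambda>c. ind (i - n, j', k') c - ind (i - n, j', k' + int w) c))"

definition bmul :: "nat \<Rightarrow> nat \<Rightarrow> 'k::field \<Rightarrow> idx \<Rightarrow> idx \<Rightarrow> idx \<Rightarrow> 'k" where
  "bmul n w \<gamma> b b' = (case b of (i, j, k) \<Rightarrow> case b' of (i', j', k') \<Rightarrow>
      (\<lambda>c. \<gamma> ^ (i * j') * mono n w (j + j') (k + k') (i + i') c))"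

definition hmul :: "nat \<Rightarrow> nat \<Rightarrow> 'k::field \<Rightarrow> (idx \<Rightarrow> 'k) \<Rightarrow> (idx \<Rightarrow> 'k) \<Rightarrow> idx \<Rightarrow> 'k" where
  "hmul n w \<gamma> a b = (\<lambda>c. \<Sum>b1\<in>supp a. \<Sum>b2\<in>supp b. a b1 * b b2 * bmul n w \<gamma> b1 b2 c)"

definition hone :: "idx \<Rightarrow> 'k::field" where
  "hone = ind (0, 0, 0)"

definition hpow :: "nat \<Rightarrow> nat \<Rightarrow> 'k::field \<Rightarrow> (idx \<Rightarrow> 'k) \<Rightarrow> nat \<Rightarrow> idx \<Rightarrow> 'k" where
  "hpow n w \<gamma> a m = (hmul n w \<gamma> a ^^ m) hone"

definition x_el :: "idx \<Rightarrow> 'k::field" where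
  "x_el = ind (0, 0, 1)"

definition g_el :: "nat \<Rightarrow> nat \<Rightarrow> idx \<Rightarrow> 'k::field" where
  "g_el n w = mono n w 1 0 0"

definition y_el :: "nat \<Rightarrow> nat \<Rightarrow> idx \<Rightarrow> 'k::field" where
  "y_el n w = mono n w 0 0 1"

definition ginv_el :: "nat \<Rightarrow> nat \<Rightarrow> idx \<Rightarrow> 'k::field" where
  "ginv_el n w = mono n w (n - 1) (- int w) 0"

definition tens :: "('a \<Rightarrow> 'k::field) \<Rightarrow> ('a \<Rightarrow> 'k) \<Rightarrow> 'a \<times> 'a \<Rightarrow> 'k" where
  "tens a b = (\<lambda>(p, q). a p * b q)"

definition tmul :: "nat \<Rightarrow> nat \<Rightarrow> 'k::field \<Rightarrow> (idx \<times> idx \<Rightarrow> 'k) \<Rightarrow> (idx \<times> idx \<Rightarrow> 'k) \<Rightarrow> idx \<times> idx \<Rightarrow> 'k" where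
  "tmul n w \<gamma> P Q = (\<lambda>(c1, c2). \<Sum>a\<in>supp P. \<Sum>b\<in>supp Q.
      P a * Q b * bmul n w \<gamma> (fst a) (fst b) c1 * bmul n w \<gamma> (snd a) (snd b) c2)"

definition Delta_y :: "nat \<Rightarrow> nat \<Rightarrow> idx \<times> idx \<Rightarrow> 'k::field" where
  "Delta_y n w = (\<lambda>pq. tens (y_el n w) (g_el n w) pq + tens hone (y_el n w) pq)"

definition Delta :: "nat \<Rightarrow> nat \<Rightarrow> 'k::field \<Rightarrow> idx \<Rightarrow> idx \<times> idx \<Rightarrow> 'k" where
  "Delta n w \<gamma> b = (case b of (i, j, k) \<Rightarrow>
     tmul n w \<gamma> (tens (ind (0, j, k)) (ind (0, j, k)))
       ((tmul n w \<gamma> (Delta_y n w) ^^ i) (tens hone hone)))"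

text \<open>(Delta (x) id) Delta on basis elements.\<close>
definition Delta2 :: "nat \<Rightarrow> nat \<Rightarrow> 'k::field \<Rightarrow> idx \<Rightarrow> idx \<times> idx \<times> idx \<Rightarrow> 'k" where
  "Delta2 n w \<gamma> b = (\<lambda>(b1, b2, b3).
     \<Sum>c\<in>{c. Delta n w \<gamma> b (c, b3) \<noteq> 0}. Delta n w \<gamma> b (c, b3) * Delta n w \<gamma> c (b1, b2))"

definition eps :: "idx \<Rightarrow> 'k::field" where
  "eps b = (case b of (i, j, k) \<Rightarrow> if i = 0 then 1 else 0)"

definition Santi :: "nat \<Rightarrow> nat \<Rightarrow> 'k::field \<Rightarrow> idx \<Rightarrow> idx \<Rightarrow> 'k" where
  "Santi n w \<gamma> b = (case b of (i, j, k) \<Rightarrow>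
     hmul n w \<gamma> (hpow n w \<gamma> (\<lambda>c. - hmul n w \<gamma> (y_el n w) (ginv_el n w) c) i)
       (hmul n w \<gamma> (hpow n w \<gamma> (ginv_el n w) j) (ind (0, 0, - k))))"

definition hact :: "('k::field \<Rightarrow> 'v::ab_group_add \<Rightarrow> 'v) \<Rightarrow> (idx \<Rightarrow> 'v \<Rightarrow> 'v) \<Rightarrow> (idx \<Rightarrow> 'k) \<Rightarrow> 'v \<Rightarrow> 'v" where
  "hact scale rho h v = (\<Sum>b\<in>supp h. scale (h b) (rho b v))"

text \<open>Left-left Yetter-Drinfeld module over B(n,w,gamma): V is the whole type 'v with
  scalar multiplication scale; rho b is the action of basis element b; the coaction is
  delta v = sum_c c (x) delta v c.\<close>
definition YD_module :: "nat \<Rightarrow> nat \<Rightarrow> 'k::field \<Rightarrow> ('k \<Rightarrow> 'v::ab_group_add \<Rightarrow> 'v)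
    \<Rightarrow> (idx \<Rightarrow> 'v \<Rightarrow> 'v) \<Rightarrow> ('v \<Rightarrow> idx \<Rightarrow> 'v) \<Rightarrow> bool" where
  "YD_module n w \<gamma> scale rho delta \<longleftrightarrow>
     vector_space scale \<and>
     \<comment> \<open>left H-module\<close>
     (\<forall>b\<in>Bidx n. Vector_Spaces.linear scale scale (rho b)) \<and>
     (\<forall>v. rho (0, 0, 0) v = v) \<and>
     (\<forall>b1\<in>Bidx n. \<forall>b2\<in>Bidx n. \<forall>v.
        rho b1 (rho b2 v) = hact scale rho (bmul n w \<gamma> b1 b2) v) \<and>
     \<comment> \<open>left H-comodule\<close>
     (\<forall>c. Vector_Spaces.linear scale scale (\<lambda>v. delta v c)) \<and>
     (\<forall>v. finite (supp (delta v)) \<and> supp (delta v) \<subseteq> Bidx n) \<and>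
     (\<forall>v. (\<Sum>c\<in>supp (delta v). scale (eps c) (delta v c)) = v) \<and>
     (\<forall>v b1 b2. delta (delta v b1) b2 =
        (\<Sum>c\<in>supp (delta v). scale (Delta n w \<gamma> c (b1, b2)) (delta v c))) \<and>
     \<comment> \<open>Yetter-Drinfeld compatibility (suffices on basis elements by linearity in h)\<close>
     (\<forall>b\<in>Bidx n. \<forall>v d. delta (rho b v) d =
        (\<Sum>t\<in>supp (Delta2 n w \<gamma> b). \<Sum>u\<in>supp (delta v).
           scale (Delta2 n w \<gamma> b t *
                  hmul n w \<gamma> (hmul n w \<gamma> (ind (fst t)) (ind u)) (Santi n w \<gamma> (snd (snd t))) d)
                 (rho (fst (snd t)) (delta v u))))"

definition YD_simple :: "nat \<Rightarrow> nat \<Rightarrow> 'k::field \<Rightarrow> ('k \<Rightarrow> 'v::ab_group_add \<Rightarrow> 'v)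
    \<Rightarrow> (idx \<Rightarrow> 'v \<Rightarrow> 'v) \<Rightarrow> ('v \<Rightarrow> idx \<Rightarrow> 'v) \<Rightarrow> bool" where
  "YD_simple n w \<gamma> scale rho delta \<longleftrightarrow>
     YD_module n w \<gamma> scale rho delta \<and> (UNIV :: 'v set) \<noteq> {0} \<and>
     (\<forall>W. module.subspace scale W \<and> (\<forall>b\<in>Bidx n. \<forall>u\<in>W. rho b u \<in> W) \<and>
          (\<forall>u\<in>W. \<forall>c. delta u c \<in> W) \<longrightarrow> W = {0} \<or> W = UNIV)"

text \<open>Standard element of type (alpha, beta, g^j x^k); every group-like g^j x^k (j in Z)
  equals a basis element with 0 <= j < n.\<close>
definition standard_elt :: "nat \<Rightarrow> nat \<Rightarrow> 'k::field \<Rightarrow> ('k \<Rightarrow> 'v::ab_group_add \<Rightarrow> 'v)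
    \<Rightarrow> (idx \<Rightarrow> 'v \<Rightarrow> 'v) \<Rightarrow> ('v \<Rightarrow> idx \<Rightarrow> 'v) \<Rightarrow> 'v \<Rightarrow> 'k \<Rightarrow> 'k \<Rightarrow> nat \<Rightarrow> int \<Rightarrow> bool" where
  "standard_elt n w \<gamma> scale rho delta v \<alpha> \<beta> j k \<longleftrightarrow>
     v \<noteq> 0 \<and> \<alpha> \<noteq> 0 \<and> \<beta> \<noteq> 0 \<and> j < n \<and>
     hact scale rho x_el v = scale \<alpha> v \<and>
     hact scale rho (g_el n w) v = scale \<beta> v \<and>
     (\<forall>c. delta v c = (if c = (0, j, k) then v else 0))"

end

theory Submission
  imports Defs
begin

lemma supp_ind[simp]: "supp (ind b :: _ \<Rightarrow> 'k::field) = {b}"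
  by (auto simp: supp_def ind_def)

lemma supp_scaled_ind: "(a::'k::field) \<noteq> 0 \<Longrightarrow> supp (\<lambda>c. a * ind b c) = {b}"
  by (auto simp: supp_def ind_def)

lemma mono_simple: "i < n \<Longrightarrow> j < n \<Longrightarrow> mono n w j k i = ind (i, j, k)"
  by (simp add: mono_def)

lemma bmul_simple: "i + i' < n \<Longrightarrow> j + j' < n \<Longrightarrow>
  bmul n w \<gamma> (i, j, k) (i', j', k') = (\<lambda>c. \<gamma> ^ (i * j') * ind (i + i', j + j', k + k') c)"
  by (simp add: bmul_def mono_simple)

lemma supp_mono: "j < 2 * n \<Longrightarrow> i < 2 * n \<Longrightarrow> supp (mono n w j k i :: _ \<Rightarrow> 'k::field) \<subseteq> Bidx n"
  by (auto simp: mono_def Let_def supp_def ind_def Bidx_def split: if_splits)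

lemma supp_bmul: "b1 \<in> Bidx n \<Longrightarrow> b2 \<in> Bidx n \<Longrightarrow> supp (bmul n w (\<gamma>::'k::field) b1 b2) \<subseteq> Bidx n"
proof -
  assume "b1 \<in> Bidx n" "b2 \<in> Bidx n"
  then obtain i j k i' j' k' where b: "b1 = (i,j,k)" "b2 = (i',j',k')" "i<n" "j<n" "i'<n" "j'<n"
    by (auto simp: Bidx_def)
  have "supp (mono n w (j + j') (k + k') (i + i') :: _ \<Rightarrow> 'k) \<subseteq> Bidx n"
    by (rule supp_mono) (use b in auto)
  then show ?thesis using b by (auto simp: bmul_def supp_def)
qed

lemma nz_sum: "sum f A \<noteq> (0::'a::comm_monoid_add) \<Longrightarrow> \<exists>x\<in>A. f x \<noteq> 0"
  by (meson sum.neutral)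

lemma supp_tens: "supp (tens a b) \<subseteq> supp a \<times> supp (b :: _ \<Rightarrow> 'k::field)"
  by (auto simp: supp_def tens_def)

lemma supp_tmul:
  assumes "supp P \<subseteq> Bidx n \<times> Bidx n" "supp Q \<subseteq> Bidx n \<times> Bidx n"
  shows "supp (tmul n w (\<gamma>::'k::field) P Q) \<subseteq> Bidx n \<times> Bidx n"
proof
  fix x assume "x \<in> supp (tmul n w \<gamma> P Q)"
  then obtain c1 c2 where x: "x = (c1, c2)" and nz: "tmul n w \<gamma> P Q (c1, c2) \<noteq> 0"
    by (cases x) (auto simp: supp_def)
  from nz obtain a b where a: "a \<in> supp P" and b: "b \<in> supp Q"
    and t: "P a * Q b * bmul n w \<gamma> (fst a) (fst b) c1 * bmul n w \<gamma> (snd a) (snd b) c2 \<noteq> 0"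
    unfolding tmul_def by (auto dest!: nz_sum)
  from a b assms have ab: "fst a \<in> Bidx n" "snd a \<in> Bidx n" "fst b \<in> Bidx n" "snd b \<in> Bidx n"
    by (auto simp: mem_Times_iff)
  from t have "c1 \<in> supp (bmul n w \<gamma> (fst a) (fst b))" "c2 \<in> supp (bmul n w \<gamma> (snd a) (snd b))"
    by (auto simp: supp_def)
  with supp_bmul[OF ab(1,3), of w \<gamma>] supp_bmul[OF ab(2,4), of w \<gamma>] show "x \<in> Bidx n \<times> Bidx n"
    using x by auto
qed

lemma supp_add: "supp (\<lambda>x. f x + g x) \<subseteq> supp f \<union> supp (g :: _ \<Rightarrow> 'k::field)"
  unfolding supp_def by auto

lemma supp_hone: "n > 0 \<Longrightarrow> supp (hone :: _ \<Rightarrow> 'k::field) \<subseteq> Bidx n"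
  by (simp add: hone_def Bidx_def)

lemma supp_Delta_y: "n > 0 \<Longrightarrow> supp (Delta_y n w :: _ \<Rightarrow> 'k::field) \<subseteq> Bidx n \<times> Bidx n"
proof -
  assume n: "n > 0"
  have y: "supp (y_el n w :: _ \<Rightarrow> 'k) \<subseteq> Bidx n" unfolding y_el_def by (rule supp_mono) (use n in auto)
  have g: "supp (g_el n w :: _ \<Rightarrow> 'k) \<subseteq> Bidx n" unfolding g_el_def by (rule supp_mono) (use n in auto)
  have "supp (Delta_y n w :: _ \<Rightarrow> 'k) \<subseteq> supp (tens (y_el n w) (g_el n w) :: _ \<Rightarrow> 'k) \<union> supp (tens (hone :: _ \<Rightarrow> 'k) (y_el n w))"
    unfolding Delta_y_def by (rule supp_add)
  also have "\<dots> \<subseteq> Bidx n \<times> Bidx n"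
    using supp_tens[of "y_el n w" "g_el n w"] supp_tens[of hone "y_el n w"] y g supp_hone[OF n, where 'k='k]
    by blast
  finally show ?thesis .
qed

lemma supp_Delta_pow: "n > 0 \<Longrightarrow>
  supp ((tmul n w (\<gamma>::'k::field) (Delta_y n w) ^^ i) (tens hone hone)) \<subseteq> Bidx n \<times> Bidx n"
proof (induction i)
  case 0
  then show ?case using supp_tens[of "hone::_\<Rightarrow>'k" "hone::_\<Rightarrow>'k"] supp_hone[of n, where 'k='k] by auto
next
  case (Suc i)
  then show ?case by (simp add: supp_tmul supp_Delta_y)
qed

lemma supp_Delta: "b \<in> Bidx n \<Longrightarrow> supp (Delta n w (\<gamma>::'k::field) b) \<subseteq> Bidx n \<times> Bidx n"
proof -
  assume b: "b \<in> Bidx n"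
  then obtain i j k where bb: "b = (i,j,k)" "j < n" "i < n" by (auto simp: Bidx_def)
  then have n: "n > 0" by auto
  have m: "(0, j, k) \<in> Bidx n" using bb by (simp add: Bidx_def)
  have "supp (tens (ind (0, j, k)) (ind (0, j, k)) :: _ \<Rightarrow> 'k) \<subseteq> Bidx n \<times> Bidx n"
    by (rule order_trans[OF supp_tens]) (simp add: m)
  then show ?thesis unfolding bb Delta_def
    by (simp add: supp_tmul supp_Delta_pow n)
qed

lemma supp_Delta2: "b \<in> Bidx n \<Longrightarrow> t \<in> supp (Delta2 n w (\<gamma>::'k::field) b) \<Longrightarrow> fst (snd t) \<in> Bidx n"
proof -
  assume b: "b \<in> Bidx n" and t: "t \<in> supp (Delta2 n w \<gamma> b)"
  obtain b1 b2 b3 where tt: "t = (b1, b2, b3)" by (cases t) auto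
  from t obtain c where c1: "Delta n w \<gamma> b (c, b3) \<noteq> 0" and c2: "Delta n w \<gamma> c (b1, b2) \<noteq> 0"
    unfolding tt Delta2_def supp_def by (auto dest!: nz_sum)
  from c1 supp_Delta[OF b, of w \<gamma>] have "c \<in> Bidx n" by (auto simp: supp_def)
  from c2 supp_Delta[OF this, of w \<gamma>] have "b2 \<in> Bidx n" by (auto simp: supp_def)
  then show ?thesis using tt by simp
qed

lemma (in vector_space) eigen_sum_zero:
  assumes fin: "finite S" and T: "module_hom scale scale T"
    and eig: "\<And>i. i \<in> S \<Longrightarrow> T (u i) = scale (l i) (u i)"
    and inj: "inj_on l S" and nz: "\<And>i. i \<in> S \<Longrightarrow> u i \<noteq> 0"
  shows "(\<Sum>i\<in>S. scale (c i) (u i)) = 0 \<Longrightarrow> \<forall>i\<in>S. c i = 0"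
  using fin eig inj nz
proof (induction S arbitrary: c rule: finite_induct)
  case empty
  then show ?case by simp
next
  case (insert a F)
  have s0: "scale (c a) (u a) + (\<Sum>i\<in>F. scale (c i) (u i)) = 0"
    using insert.prems(1) insert.hyps by simp
  have Ts: "T (scale (c a) (u a) + (\<Sum>i\<in>F. scale (c i) (u i))) =
     scale (c a * l a) (u a) + (\<Sum>i\<in>F. scale (c i * l i) (u i))"
    using insert.prems(2) by (simp add: module_hom.add[OF T] module_hom.sum[OF T] module_hom.scale[OF T] mult.commute)
  have Ls: "scale (l a) (scale (c a) (u a) + (\<Sum>i\<in>F. scale (c i) (u i))) =
     scale (c a * l a) (u a) + (\<Sum>i\<in>F. scale (l a * c i) (u i))"
    by (simp add: scale_right_distrib scale_sum_right mult.commute)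
  have "(\<Sum>i\<in>F. scale (c i * l i) (u i)) - (\<Sum>i\<in>F. scale (l a * c i) (u i)) = 0"
    using Ts Ls s0 module_hom.zero[OF T] by (metis add_diff_cancel_left' diff_self scale_zero_right)
  then have "(\<Sum>i\<in>F. scale (c i * (l i - l a)) (u i)) = 0"
    by (simp add: sum_subtractf[symmetric] algebra_simps)
  then have "\<forall>i\<in>F. c i * (l i - l a) = 0"
    using insert.IH[of "\<lambda>i. c i * (l i - l a)"] insert.prems by (auto simp: inj_on_insert)
  moreover have "\<forall>i\<in>F. l i \<noteq> l a"
    using insert.prems(3) insert.hyps(2) by (auto simp: inj_on_def)
  ultimately have cF: "\<forall>i\<in>F. c i = 0" by simp
  then have "(\<Sum>i\<in>F. scale (c i) (u i)) = 0" by simp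
  with s0 have "scale (c a) (u a) = 0" by simp
  with insert.prems(4)[of a] have "c a = 0" by simp
  with cF show ?case by simp
qed

lemma (in vector_space) eigen_indep:
  assumes fin: "finite S" and T: "module_hom scale scale T"
    and eig: "\<And>i. i \<in> S \<Longrightarrow> T (u i) = scale (l i) (u i)"
    and inj: "inj_on l S" and nz: "\<And>i. i \<in> S \<Longrightarrow> u i \<noteq> 0"
  shows "inj_on u S \<and> \<not> dependent (u ` S)"
proof
  show iu: "inj_on u S"
  proof (rule inj_onI)
    fix i i' assume i: "i \<in> S" "i' \<in> S" "u i = u i'"
    then have "scale (l i) (u i) = scale (l i') (u i)" using eig[of i] eig[of i'] by metis
    then have "l i = l i'" using nz[OF i(1)] by simp
    then show "i = i'" using inj i by (auto simp: inj_on_def)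
  qed
  show "\<not> dependent (u ` S)"
  proof (rule independent_if_scalars_zero)
    show "finite (u ` S)" using fin by simp
    fix f x assume s: "(\<Sum>x\<in>u ` S. scale (f x) x) = 0" and x: "x \<in> u ` S"
    have "(\<Sum>i\<in>S. scale (f (u i)) (u i)) = 0" using s by (simp add: sum.reindex[OF iu])
    then have "\<forall>i\<in>S. f (u i) = 0" using eigen_sum_zero[OF fin T eig inj nz, of "\<lambda>i. f (u i)"] by blast
    then show "f x = 0" using x by auto
  qed
qed

lemma hact_scaled_ind: "(a::'k::field) \<noteq> 0 \<Longrightarrow> hact scale rho (\<lambda>c. a * ind b c) u = scale a (rho b u)"
  by (simp add: hact_def supp_scaled_ind) (simp add: ind_def)

lemma hact_ind: "hact scale rho (ind b :: _ \<Rightarrow> 'k::field) u = scale 1 (rho b u)"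
  by (simp add: hact_def) (simp add: ind_def)

lemma hmul_ind: "hmul n w (\<gamma>::'k::field) (ind b1) (ind b2) = bmul n w \<gamma> b1 b2"
  by (simp add: hmul_def) (simp add: ind_def)

lemma hpow_y: "i < n \<Longrightarrow> hpow n w (\<gamma>::'k::field) (y_el n w) i = ind (i, 0, 0)"
proof (induction i)
  case 0
  then show ?case by (simp add: hpow_def hone_def)
next
  case (Suc i)
  then have "y_el n w = (ind (1, 0, 0) :: _ \<Rightarrow> 'k)" by (simp add: y_el_def mono_simple)
  moreover have "hpow n w \<gamma> (y_el n w) (Suc i) = hmul n w \<gamma> (y_el n w) (hpow n w \<gamma> (y_el n w) i)"
    by (simp add: hpow_def)
  moreover have "hpow n w \<gamma> (y_el n w) i = ind (i, 0, 0)" using Suc by simp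
  ultimately show ?case using Suc.prems by (simp add: hmul_ind bmul_simple)
qed

theorem lemma3p5:
  fixes n w p :: nat and \<gamma> :: "'k::field_char_0"
    and scale :: "'k \<Rightarrow> 'v::ab_group_add \<Rightarrow> 'v"
    and rho :: "idx \<Rightarrow> 'v \<Rightarrow> 'v" and delta :: "'v \<Rightarrow> idx \<Rightarrow> 'v"
    and v :: 'v and \<alpha> \<beta> :: 'k and j :: nat and k :: int
  assumes alg_closed: "\<forall>q :: 'k poly. degree q > 0 \<longrightarrow> (\<exists>z. poly q z = 0)"
    and n_pos: "n > 0" and w_pos: "w > 0"
    and prim: "\<gamma> ^ n = 1" "\<forall>m. 0 < m \<and> m < n \<longrightarrow> \<gamma> ^ m \<noteq> 1"
    and simple: "YD_simple n w \<gamma> scale rho delta"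
    and dim: "vector_space.dim scale (UNIV :: 'v set) = p + 1"
    and std: "standard_elt n w \<gamma> scale rho delta v \<alpha> \<beta> j k"
  shows "inj_on (\<lambda>i. hact scale rho (hpow n w \<gamma> (y_el n w) i) v) {0..p} \<and>
         \<not> module.dependent scale ((\<lambda>i. hact scale rho (hpow n w \<gamma> (y_el n w) i) v) ` {0..p}) \<and>
         module.span scale ((\<lambda>i. hact scale rho (hpow n w \<gamma> (y_el n w) i) v) ` {0..p}) = UNIV"
proof -
  have YD: "YD_module n w \<gamma> scale rho delta" using simple unfolding YD_simple_def by (rule conjunct1)
  note Yc = YD[unfolded YD_module_def]
  have vs: "vector_space scale" using Yc by (rule conjunct1)
  interpret vs: vector_space scale by (rule vs)
  have linA: "\<forall>b\<in>Bidx n. Vector_Spaces.linear scale scale (rho b)"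
    using Yc by (elim conjE)
  have lin: "\<And>b. b \<in> Bidx n \<Longrightarrow> Vector_Spaces.linear scale scale (rho b)"
    using linA by blast
  have hom: "\<And>b. b \<in> Bidx n \<Longrightarrow> module_hom scale scale (rho b)"
    using lin by (simp add: linear_iff_module_hom)
  have rsc: "\<And>b a u. b \<in> Bidx n \<Longrightarrow> rho b (scale a u) = scale a (rho b u)"
    using hom module_hom.scale by metis
  have radd: "\<And>b u u'. b \<in> Bidx n \<Longrightarrow> rho b (u + u') = rho b u + rho b u'"
    using hom module_hom.add by metis
  have rzero: "\<And>b. b \<in> Bidx n \<Longrightarrow> rho b 0 = 0"
    using hom module_hom.zero by metis
  have r0A: "\<forall>u. rho (0, 0, 0) u = u" using Yc by (elim conjE)
  have r0: "\<And>u. rho (0, 0, 0) u = u" using r0A by blast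
  have multA: "\<forall>b1\<in>Bidx n. \<forall>b2\<in>Bidx n. \<forall>u. rho b1 (rho b2 u) = hact scale rho (bmul n w \<gamma> b1 b2) u"
    using Yc by (elim conjE)
  have mult: "\<And>b1 b2 u. b1 \<in> Bidx n \<Longrightarrow> b2 \<in> Bidx n \<Longrightarrow> rho b1 (rho b2 u) = hact scale rho (bmul n w \<gamma> b1 b2) u"
    using multA by blast
  have dlinA: "\<forall>c. Vector_Spaces.linear scale scale (\<lambda>u. delta u c)"
    using Yc by (elim conjE)
  have dlin: "\<And>c. Vector_Spaces.linear scale scale (\<lambda>u. delta u c)"
    using dlinA by blast
  have dhom: "\<And>c. module_hom scale scale (\<lambda>u. delta u c)"
    using dlin by (simp add: linear_iff_module_hom)
  have ydA: "\<forall>b\<in>Bidx n. \<forall>u d. delta (rho b u) d =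
        (\<Sum>t\<in>supp (Delta2 n w \<gamma> b). \<Sum>u'\<in>supp (delta u).
           scale (Delta2 n w \<gamma> b t *
                  hmul n w \<gamma> (hmul n w \<gamma> (ind (fst t)) (ind u')) (Santi n w \<gamma> (snd (snd t))) d)
                 (rho (fst (snd t)) (delta u u')))"
    using Yc by (elim conjE)
  have yd: "\<And>b u d. b \<in> Bidx n \<Longrightarrow> delta (rho b u) d =
        (\<Sum>t\<in>supp (Delta2 n w \<gamma> b). \<Sum>u'\<in>supp (delta u).
           scale (Delta2 n w \<gamma> b t *
                  hmul n w \<gamma> (hmul n w \<gamma> (ind (fst t)) (ind u')) (Santi n w \<gamma> (snd (snd t))) d)
                 (rho (fst (snd t)) (delta u u')))"
    using ydA by blast
  have simpW: "\<And>W. vs.subspace W \<Longrightarrow> (\<forall>b\<in>Bidx n. \<forall>u\<in>W. rho b u \<in> W) \<Longrightarrow>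
          (\<forall>u\<in>W. \<forall>c. delta u c \<in> W) \<Longrightarrow> W = {0} \<or> W = UNIV"
  proof -
    have "\<forall>W. vs.subspace W \<and> (\<forall>b\<in>Bidx n. \<forall>u\<in>W. rho b u \<in> W) \<and>
          (\<forall>u\<in>W. \<forall>c. delta u c \<in> W) \<longrightarrow> W = {0} \<or> W = UNIV"
      using simple unfolding YD_simple_def by (elim conjE)
    then show "\<And>W. vs.subspace W \<Longrightarrow> (\<forall>b\<in>Bidx n. \<forall>u\<in>W. rho b u \<in> W) \<Longrightarrow>
          (\<forall>u\<in>W. \<forall>c. delta u c \<in> W) \<Longrightarrow> W = {0} \<or> W = UNIV" by blast
  qed
  note Sc = std[unfolded standard_elt_def]
  have vnz: "v \<noteq> 0" using Sc by (elim conjE)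
  have anz: "\<alpha> \<noteq> 0" using Sc by (elim conjE)
  have xv: "hact scale rho x_el v = scale \<alpha> v" using Sc by (elim conjE)
  have gv: "hact scale rho (g_el n w) v = scale \<beta> v" using Sc by (elim conjE)
  have dvA: "\<forall>c. delta v c = (if c = (0, j, k) then v else 0)" using Sc by (elim conjE)
  have dv: "\<And>c. delta v c = (if c = (0, j, k) then v else 0)" using dvA by blast
  have gnz: "\<gamma> \<noteq> 0" using prim(1) n_pos by (cases "\<gamma> = 0") (simp_all add: power_0_left)
  have B0: "(0, 0, 0) \<in> Bidx n" using n_pos by (simp add: Bidx_def)
  have mul_simple: "\<And>i j k i' j' k' u. i + i' < n \<Longrightarrow> j + j' < n \<Longrightarrow>
      rho (i, j, k) (rho (i', j', k') u) = scale (\<gamma> ^ (i * j')) (rho (i + i', j + j', k + k') u)"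
  proof -
    fix i j k i' j' k' u assume a: "i + i' < n" "j + j' < n"
    then have "(i, j, k) \<in> Bidx n" "(i', j', k') \<in> Bidx n" by (auto simp: Bidx_def)
    then have "rho (i, j, k) (rho (i', j', k') u) = hact scale rho (bmul n w \<gamma> (i, j, k) (i', j', k')) u"
      by (rule mult)
    also have "\<dots> = scale (\<gamma> ^ (i * j')) (rho (i + i', j + j', k + k') u)"
      using a gnz by (simp add: bmul_simple hact_scaled_ind)
    finally show "rho (i, j, k) (rho (i', j', k') u) = scale (\<gamma> ^ (i * j')) (rho (i + i', j + j', k + k') u)" .
  qed

  define R where "R = (\<lambda>b. rho b v) ` Bidx n"
  have hact_span: "\<And>h. supp h \<subseteq> Bidx n \<Longrightarrow> hact scale rho h v \<in> vs.span R"
    unfolding hact_def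
    by (rule vs.span_sum, rule vs.span_scale, rule vs.span_base) (auto simp: R_def)
  have spanR: "vs.span R = UNIV"
  proof -
    have "vs.span R = {0} \<or> vs.span R = UNIV"
    proof (rule simpW)
      show "vs.subspace (vs.span R)" by simp
      show "\<forall>b\<in>Bidx n. \<forall>u\<in>vs.span R. rho b u \<in> vs.span R"
      proof (intro ballI)
        fix b u assume b: "b \<in> Bidx n" and u: "u \<in> vs.span R"
        from u show "rho b u \<in> vs.span R"
        proof (induction rule: vs.span_induct_alt)
          case base
          then show ?case using rzero[OF b] vs.span_zero by simp
        next
          case (step c x y)
          then obtain b' where b': "b' \<in> Bidx n" "x = rho b' v" by (auto simp: R_def)
          have "rho b x = hact scale rho (bmul n w \<gamma> b b') v" using mult[OF b b'(1)] b'(2) by simp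
          also have "\<dots> \<in> vs.span R" by (rule hact_span[OF supp_bmul[OF b b'(1)]])
          finally have "rho b x \<in> vs.span R" .
          then show ?case using step radd[OF b] rsc[OF b] by (simp add: vs.span_add vs.span_scale)
        qed
      qed
      show "\<forall>u\<in>vs.span R. \<forall>c. delta u c \<in> vs.span R"
      proof (intro ballI allI)
        fix u c assume u: "u \<in> vs.span R"
        from u show "delta u c \<in> vs.span R"
        proof (induction rule: vs.span_induct_alt)
          case base
          then show ?case using module_hom.zero[OF dhom] vs.span_zero by metis
        next
          case (step a x y)
          then obtain b where b: "b \<in> Bidx n" "x = rho b v" by (auto simp: R_def)
          have "delta x c \<in> vs.span R"
            unfolding b(2) yd[OF b(1)]
          proof (rule vs.span_sum, rule vs.span_sum)
            fix t u' assume t: "t \<in> supp (Delta2 n w \<gamma> b)" and u': "u' \<in> supp (delta v)"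
            then have "delta v u' = v" using dv[of u'] by (auto simp: supp_def split: if_splits)
            moreover have "fst (snd t) \<in> Bidx n" by (rule supp_Delta2[OF b(1) t])
            ultimately show "scale (Delta2 n w \<gamma> b t *
                  hmul n w \<gamma> (hmul n w \<gamma> (ind (fst t)) (ind u')) (Santi n w \<gamma> (snd (snd t))) c)
                 (rho (fst (snd t)) (delta v u')) \<in> vs.span R"
              by (intro vs.span_scale vs.span_base) (auto simp: R_def)
          qed
          moreover have "delta (scale a x + y) c = scale a (delta x c) + delta y c"
            using module_hom.add[OF dhom[of c]] module_hom.scale[OF dhom[of c]] by simp
          ultimately show ?case using step.IH by (simp add: vs.span_add vs.span_scale)
        qed
      qed
    qed
    moreover have "v \<in> R" unfolding R_def by (rule image_eqI[where x="(0,0,0)"]) (simp_all add: r0 B0)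
    then have "v \<in> vs.span R" by (rule vs.span_base)
    ultimately show ?thesis using vnz by auto
  qed

  define y where "y i = rho (i, 0, 0) v" for i
  have inspan1: "\<And>b u. b \<in> Bidx n \<Longrightarrow> rho b v \<in> vs.span {v} \<Longrightarrow> u \<in> vs.span {v} \<Longrightarrow> rho b u \<in> vs.span {v}"
  proof -
    fix b u assume b: "b \<in> Bidx n" and bv: "rho b v \<in> vs.span {v}" and u: "u \<in> vs.span {v}"
    then obtain c where "u = scale c v" by (auto simp: vs.span_singleton)
    then have "rho b u = scale c (rho b v)" using rsc[OF b] by simp
    then show "rho b u \<in> vs.span {v}" using bv by (simp add: vs.span_scale)
  qed
  have B001: "(0, 0, 1) \<in> Bidx n" "(0, 0, -1) \<in> Bidx n" using n_pos by (auto simp: Bidx_def)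
  have x1: "rho (0, 0, 1) v = scale \<alpha> v"
    using xv by (simp add: x_el_def hact_ind)
  have xm1: "rho (0, 0, -1) v = scale (inverse \<alpha>) v"
  proof -
    have "rho (0, 0, -1) (rho (0, 0, 1) v) = scale (\<gamma> ^ (0 * 0)) (rho (0 + 0, 0 + 0, -1 + 1) v)"
      by (rule mul_simple) (use n_pos in auto)
    then have "scale \<alpha> (rho (0, 0, -1) v) = v" using x1 rsc[OF B001(2)] r0 by simp
    then have "scale (inverse \<alpha>) (scale \<alpha> (rho (0, 0, -1) v)) = scale (inverse \<alpha>) v" by simp
    then show ?thesis using anz by simp
  qed
  have xk: "\<And>kk. rho (0, 0, kk) v \<in> vs.span {v}"
  proof -
    fix kk :: int
    show "rho (0, 0, kk) v \<in> vs.span {v}"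
    proof (induction kk rule: int_induct[where k=0])
      case base
      then show ?case using r0[of v] by (simp add: vs.span_base)
    next
      case (step1 i)
      have "rho (0, 0, 1) (rho (0, 0, i) v) = scale (\<gamma> ^ (0 * 0)) (rho (0 + 0, 0 + 0, 1 + i) v)"
        by (rule mul_simple) (use n_pos in auto)
      then have "rho (0, 0, i + 1) v = rho (0, 0, 1) (rho (0, 0, i) v)" by (simp add: add.commute)
      moreover have "rho (0, 0, 1) v \<in> vs.span {v}" using x1 by (simp add: vs.span_scale vs.span_base)
      ultimately show ?case using inspan1[OF B001(1)] step1 by simp
    next
      case (step2 i)
      have "rho (0, 0, -1) (rho (0, 0, i) v) = scale (\<gamma> ^ (0 * 0)) (rho (0 + 0, 0 + 0, -1 + i) v)"
        by (rule mul_simple) (use n_pos in auto)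
      then have "rho (0, 0, i - 1) v = rho (0, 0, -1) (rho (0, 0, i) v)" by simp
      moreover have "rho (0, 0, -1) v \<in> vs.span {v}" using xm1 by (simp add: vs.span_scale vs.span_base)
      ultimately show ?case using inspan1[OF B001(2)] step2 by simp
    qed
  qed
  have gjk: "\<And>jj kk. jj < n \<Longrightarrow> rho (0, jj, kk) v \<in> vs.span {v}"
  proof -
    fix jj kk assume "jj < n"
    then show "rho (0, jj, kk) v \<in> vs.span {v}"
    proof (induction jj)
      case 0
      show ?case by (rule xk)
    next
      case (Suc jj)
      then have n1: "1 < n" by simp
      have B010: "(0, 1, 0) \<in> Bidx n" using n1 by (simp add: Bidx_def)
      have "rho (0, 1, 0) v = scale \<beta> v"
        using gv n1 by (simp add: g_el_def mono_simple hact_ind)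
      then have g1: "rho (0, 1, 0) v \<in> vs.span {v}" by (simp add: vs.span_scale vs.span_base)
      have "rho (0, 1, 0) (rho (0, jj, kk) v) = scale (\<gamma> ^ (0 * jj)) (rho (0 + 0, 1 + jj, 0 + kk) v)"
        by (rule mul_simple) (use Suc.prems in auto)
      then have "rho (0, Suc jj, kk) v = rho (0, 1, 0) (rho (0, jj, kk) v)" by simp
      then show ?case using inspan1[OF B010 g1] Suc by simp
    qed
  qed
  have ijk: "\<And>i jj kk. i < n \<Longrightarrow> jj < n \<Longrightarrow> rho (i, jj, kk) v \<in> vs.span (y ` {..<n})"
  proof -
    fix i jj kk assume i: "i < n" and jj: "jj < n"
    obtain c where c: "rho (0, jj, kk) v = scale c v" using gjk[OF jj] by (auto simp: vs.span_singleton)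
    have Bi: "(i, 0, 0) \<in> Bidx n" using i by (simp add: Bidx_def)
    have "rho (i, 0, 0) (rho (0, jj, kk) v) = scale (\<gamma> ^ (i * jj)) (rho (i + 0, 0 + jj, 0 + kk) v)"
      by (rule mul_simple) (use i jj in auto)
    then have "scale c (y i) = scale (\<gamma> ^ (i * jj)) (rho (i, jj, kk) v)"
      using c rsc[OF Bi] by (simp add: y_def)
    then have "scale (inverse (\<gamma> ^ (i * jj))) (scale c (y i)) = rho (i, jj, kk) v"
      using gnz by simp
    moreover have "y i \<in> vs.span (y ` {..<n})" using i by (intro vs.span_base) simp
    ultimately show "rho (i, jj, kk) v \<in> vs.span (y ` {..<n})" using vs.span_scale by metis
  qed
  have spanY: "vs.span (y ` {..<n}) = UNIV"
  proof -
    have "R \<subseteq> vs.span (y ` {..<n})"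
    proof
      fix x assume "x \<in> R"
      then obtain i jj kk where "x = rho (i, jj, kk) v" "i < n" "jj < n"
        unfolding R_def Bidx_def by blast
      then show "x \<in> vs.span (y ` {..<n})" using ijk by simp
    qed
    then have "vs.span R \<subseteq> vs.span (y ` {..<n})" by (simp add: vs.span_minimal)
    then show ?thesis using spanR by auto
  qed

  have chain: "\<And>i. Suc i < n \<Longrightarrow> y (Suc i) = rho (1, 0, 0) (y i)"
  proof -
    fix i assume i: "Suc i < n"
    have "rho (1, 0, 0) (rho (i, 0, 0) v) = scale (\<gamma> ^ (1 * 0)) (rho (1 + i, 0 + 0, 0 + 0) v)"
      by (rule mul_simple) (use i in auto)
    then show "y (Suc i) = rho (1, 0, 0) (y i)" by (simp add: y_def)
  qed
  have zprop: "\<And>i d. i + d < n \<Longrightarrow> y i = 0 \<Longrightarrow> y (i + d) = 0"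
  proof -
    fix i d assume "i + d < n" "y i = 0"
    then show "y (i + d) = 0"
    proof (induction d)
      case 0
      then show ?case by simp
    next
      case (Suc d)
      have B1: "(1, 0, 0) \<in> Bidx n" using Suc.prems by (simp add: Bidx_def)
      have "y (i + Suc d) = rho (1, 0, 0) (y (i + d))" using chain[of "i + d"] Suc.prems by simp
      then show ?case using Suc rzero[OF B1] by simp
    qed
  qed
  define S where "S = {i. i < n \<and> y i \<noteq> 0}"
  have finS: "finite S" unfolding S_def by simp
  have down: "\<And>i i'. i \<le> i' \<Longrightarrow> i' \<in> S \<Longrightarrow> i \<in> S"
  proof -
    fix i i' assume ii: "i \<le> i'" "i' \<in> S"
    then have "i' = i + (i' - i)" "i' < n" "y i' \<noteq> 0" by (auto simp: S_def)
    then show "i \<in> S" using zprop[of i "i' - i"] by (auto simp: S_def)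
  qed
  have spanS: "vs.span (y ` S) = UNIV"
  proof -
    have "y ` {..<n} \<subseteq> insert 0 (y ` S)" by (auto simp: S_def)
    then have "vs.span (y ` {..<n}) \<subseteq> vs.span (insert 0 (y ` S))" by (rule vs.span_mono)
    then show ?thesis using spanY by auto
  qed
  define T where "T = (if n = 1 then id else rho (0, 1, 0))"
  define l where "l i = (if n = 1 then 1 else \<beta> * inverse (\<gamma> ^ i))" for i
  have Thom: "module_hom scale scale T"
  proof (cases "n = 1")
    case True
    then show ?thesis using vs.linear_id by (simp add: T_def linear_iff_module_hom)
  next
    case False
    then have "(0, 1, 0) \<in> Bidx n" using n_pos by (simp add: Bidx_def)
    then show ?thesis using hom False by (simp add: T_def)
  qed
  have eig: "\<And>i. i \<in> S \<Longrightarrow> T (y i) = scale (l i) (y i)"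
  proof -
    fix i assume "i \<in> S"
    then have i: "i < n" by (simp add: S_def)
    show "T (y i) = scale (l i) (y i)"
    proof (cases "n = 1")
      case True
      then show ?thesis by (simp add: T_def l_def)
    next
      case False
      then have n1: "1 < n" using n_pos by simp
      have Bi: "(i, 0, 0) \<in> Bidx n" using i by (simp add: Bidx_def)
      have g1: "rho (0, 1, 0) v = scale \<beta> v"
        using gv n1 by (simp add: g_el_def mono_simple hact_ind)
      have e1: "rho (0, 1, 0) (rho (i, 0, 0) v) = scale (\<gamma> ^ (0 * 0)) (rho (0 + i, 1 + 0, 0 + 0) v)"
        by (rule mul_simple) (use i n1 in auto)
      have e2: "rho (i, 0, 0) (rho (0, 1, 0) v) = scale (\<gamma> ^ (i * 1)) (rho (i + 0, 0 + 1, 0 + 0) v)"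
        by (rule mul_simple) (use i n1 in auto)
      from e2 g1 rsc[OF Bi] have "scale \<beta> (y i) = scale (\<gamma> ^ i) (rho (i, 1, 0) v)"
        by (simp add: y_def)
      then have "scale (inverse (\<gamma> ^ i)) (scale \<beta> (y i)) = rho (i, 1, 0) v"
        using gnz by simp
      then show ?thesis using e1 False by (simp add: T_def l_def y_def mult.commute)
    qed
  qed
  have linj: "inj_on l S"
  proof (cases "n = 1")
    case True
    then have "S \<subseteq> {0}" by (auto simp: S_def)
    then show ?thesis using inj_on_subset[of l "{0}" S] by simp
  next
    case False
    have bnz: "\<beta> \<noteq> 0" using Sc by (elim conjE)
    have key: "\<And>i i'. i < i' \<Longrightarrow> i' < n \<Longrightarrow> \<gamma> ^ i \<noteq> \<gamma> ^ i'"
    proof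
      fix i i' assume ii: "i < i'" "i' < n" "\<gamma> ^ i = \<gamma> ^ i'"
      have "\<gamma> ^ i' = \<gamma> ^ i * \<gamma> ^ (i' - i)" using ii(1) by (simp add: power_add[symmetric])
      then have "\<gamma> ^ (i' - i) = 1" using ii(3) gnz by simp
      then show False using prim(2) ii by auto
    qed
    show ?thesis
    proof (rule inj_onI)
      fix i i' assume i: "i \<in> S" "i' \<in> S" "l i = l i'"
      then have "\<gamma> ^ i = \<gamma> ^ i'" using False bnz gnz by (simp add: l_def)
      moreover have "i < n" "i' < n" using i by (auto simp: S_def)
      ultimately show "i = i'" using key[of i i'] key[of i' i] by (cases i i' rule: linorder_cases) auto
    qed
  qed
  have nzS: "\<And>i. i \<in> S \<Longrightarrow> y i \<noteq> 0" by (simp add: S_def)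
  have indep: "inj_on y S \<and> \<not> vs.dependent (y ` S)"
    by (rule vs.eigen_indep[OF finS Thom eig linj nzS])
  have "vs.dim (UNIV :: 'v set) = card (y ` S)"
    using vs.dim_span_eq_card_independent[of "y ` S"] indep spanS by simp
  then have cardS: "card S = p + 1" using dim card_image[of y S] indep by simp
  have "S \<subseteq> {..<p + 1}"
  proof
    fix i assume i: "i \<in> S"
    have "{0..i} \<subseteq> S" using down i by auto
    then have "card {0..i} \<le> card S" using finS by (rule card_mono[rotated])
    then show "i \<in> {..<p + 1}" using cardS by simp
  qed
  then have "S = {..<p + 1}" using card_subset_eq[of "{..<p+1}" S] cardS by simp
  moreover have "{..<p + 1} = {0..p}" by auto
  ultimately have S_eq: "S = {0..p}" by simp
  have "p \<in> S" using S_eq by simp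
  then have pn: "p < n" by (simp add: S_def)
  define f where "f i = hact scale rho (hpow n w \<gamma> (y_el n w) i) v" for i
  have fy: "\<And>i. i \<in> {0..p} \<Longrightarrow> f i = y i"
  proof -
    fix i assume "i \<in> {0..p}"
    then have "i < n" using pn by simp
    then show "f i = y i" by (simp add: f_def hpow_y hact_ind y_def)
  qed
  have img: "f ` {0..p} = y ` S"
    unfolding S_eq by (rule image_cong[OF refl fy])
  have "inj_on f {0..p}"
    using indep S_eq inj_on_cong[of "{0..p}" f y] fy by simp
  then show ?thesis using img indep spanS unfolding f_def by simp
qed

end
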